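(* Let $n\ge2$, let $A\in\mathbb{R}^{n\times n}$ be symmetric with zero diagonal, $\theta\in\mathbb{R}^n$, $\lambda>0$, and $p_1,\dots,p_n\in[0,1)$ with $p_{\max}=\max_ip_i$. Then for every fixed $w\in\mathbb{R}^{2n+1}$, $\mathbb{E}_{X\sim\mathcal{D}_{\mathsf{miss}}}[\underline G(w;X)]=\nabla\widetilde{\underline S}(w)$, and for all $X\in\{-1,0,1\}^n$ and $w\in\Delta(\lambda,2n+1)$, $\|\underline G(w;X)\|_\infty\le\frac{1}{(1-p_{\max})^2}\exp\big(\frac{\lambda}{1-p_{\max}}\big)$.
   Context: Ising model $\mathcal{D}(A,\theta)$ on $\{-1,1\}^n$: $\Pr[Z=z]\propto\exp\big(\sum_{i<j}A_{ij}z_iz_j+\sum_i\theta_iz_i\big)$. Missing-data distribution $\mathcal{D}_{\mathsf{miss}}$: draw $Z\sim\mathcal{D}(A,\theta)$ and independent $C_1,\dots,C_n\in\{0,1\}$ with $\Pr[C_i=1]=1-p_i$; output $X$ with $X_i=C_iZ_i$. $\Delta(W,k)=\{x\in\mathbb{R}^k:x\ge0,\sum_ix_i=W\}$. For $w\in\mathbb{R}^{2n+1}$ put $v_j=w_j-w_{n+j}$ for $j\in[n]$ and $\widetilde{\underline S}(w)=\mathbb{E}_{Z\sim\mathcal{D}(A,\theta)}\big[\exp\big(-\sum_{j=1}^{n-1}v_jZ_nZ_j-v_nZ_n\big)\big]$. Estimator: for $X\in\{-1,0,1\}^n$ and $i\in[n-1]$, $$\underline g^i(w;X)=-\frac{\exp(-v_nX_n)X_n}{1-p_n}\cdot\frac{\exp(-v_iX_nX_i)X_i}{1-p_i}\cdot\prod_{j\in[n-1],j\ne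 i}\frac{\exp(-v_jX_nX_j)-p_j}{1-p_j},\qquad \underline g^n(w;X)=-\frac{\exp(-v_nX_n)X_n}{1-p_n}\prod_{j\in[n-1]}\frac{\exp(-v_jX_nX_j)-p_j}{1-p_j},$$ and $\underline G(w;X)=\sum_{i=1}^{n}\underline g^i(w;X)(e^i-e^{n+i})\in\mathbb{R}^{2n+1}$, with $e^i$ the standard basis vectors of $\mathbb{R}^{2n+1}$. *)

theory Defs
  imports Complex_Main "HOL-Library.FuncSet"
begin

text \<open>Indices are 1-based as in the paper: spins/coordinates live on {1..n},
  the parameter vector w on {1..2n+1}. Vectors are functions nat => real.\<close>

definition spins :: "nat \<Rightarrow> (nat \<Rightarrow> real) set" where
  "spins n = PiE {1..n} (\<lambda>_. {-1, 1})"

definition masks :: "nat \<Rightarrow> (nat \<Rightarrow> real) set" where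
  "masks n = PiE {1..n} (\<lambda>_. {0, 1})"

definition obs_set :: "nat \<Rightarrow> (nat \<Rightarrow> real) set" where
  "obs_set n = PiE {1..n} (\<lambda>_. {-1, 0, 1})"

definition ising_weight :: "nat \<Rightarrow> (nat \<Rightarrow> nat \<Rightarrow> real) \<Rightarrow> (nat \<Rightarrow> real) \<Rightarrow> (nat \<Rightarrow> real) \<Rightarrow> real" where
  "ising_weight n A \<theta> z =
     exp ((\<Sum>i\<in>{1..n}. \<Sum>j\<in>{i<..n}. A i j * z i * z j) + (\<Sum>i\<in>{1..n}. \<theta> i * z i))"

definition ising_expect :: "nat \<Rightarrow> (nat \<Rightarrow> nat \<Rightarrow> real) \<Rightarrow> (nat \<Rightarrow> real) \<Rightarrow> ((nat \<Rightarrow> real) \<Rightarrow> real) \<Rightarrow> real" where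
  "ising_expect n A \<theta> f =
     (\<Sum>z\<in>spins n. ising_weight n A \<theta> z * f z) / (\<Sum>z\<in>spins n. ising_weight n A \<theta> z)"

text \<open>Expectation under D_miss: Z ~ D(A,theta), independent C_i with Pr[C_i=1] = 1 - p_i,
  X_i = C_i Z_i.\<close>
definition miss_expect :: "nat \<Rightarrow> (nat \<Rightarrow> nat \<Rightarrow> real) \<Rightarrow> (nat \<Rightarrow> real) \<Rightarrow> (nat \<Rightarrow> real)
      \<Rightarrow> ((nat \<Rightarrow> real) \<Rightarrow> real) \<Rightarrow> real" where
  "miss_expect n A \<theta> p f =
     ising_expect n A \<theta> (\<lambda>z. \<Sum>c\<in>masks n.
        (\<Prod>i\<in>{1..n}. if c i = 1 then 1 - p i else p i) *
        f (\<lambda>i. if i \<in> {1..n} then c i * z i else 0))"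

definition vv :: "nat \<Rightarrow> (nat \<Rightarrow> real) \<Rightarrow> nat \<Rightarrow> real" where
  "vv n w j = w j - w (n + j)"

definition S_tilde :: "nat \<Rightarrow> (nat \<Rightarrow> nat \<Rightarrow> real) \<Rightarrow> (nat \<Rightarrow> real) \<Rightarrow> (nat \<Rightarrow> real) \<Rightarrow> real" where
  "S_tilde n A \<theta> w = ising_expect n A \<theta>
     (\<lambda>z. exp (- (\<Sum>j\<in>{1..n-1}. vv n w j * z n * z j) - vv n w n * z n))"

definition g_under :: "nat \<Rightarrow> (nat \<Rightarrow> real) \<Rightarrow> (nat \<Rightarrow> real) \<Rightarrow> (nat \<Rightarrow> real) \<Rightarrow> nat \<Rightarrow> real" where
  "g_under n p w X i =
     (if i = n then
        - (exp (- vv n w n * X n) * X n / (1 - p n)) *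
          (\<Prod>j\<in>{1..n-1}. (exp (- vv n w j * X n * X j) - p j) / (1 - p j))
      else
        - (exp (- vv n w n * X n) * X n / (1 - p n)) *
          (exp (- vv n w i * X n * X i) * X i / (1 - p i)) *
          (\<Prod>j\<in>{1..n-1} - {i}. (exp (- vv n w j * X n * X j) - p j) / (1 - p j)))"

definition G_under :: "nat \<Rightarrow> (nat \<Rightarrow> real) \<Rightarrow> (nat \<Rightarrow> real) \<Rightarrow> (nat \<Rightarrow> real) \<Rightarrow> nat \<Rightarrow> real" where
  "G_under n p w X k =
     (\<Sum>i\<in>{1..n}. g_under n p w X i *
        ((if k = i then 1 else 0) - (if k = n + i then 1 else 0)))"

definition linf_norm :: "nat \<Rightarrow> (nat \<Rightarrow> real) \<Rightarrow> real" where
  "linf_norm m x = Max ((\<lambda>k. \<bar>x k\<bar>) ` {1..m})"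

definition simplex :: "real \<Rightarrow> nat \<Rightarrow> (nat \<Rightarrow> real) set" where
  "simplex W m = {x. (\<forall>k\<in>{1..m}. x k \<ge> 0) \<and> (\<Sum>k\<in>{1..m}. x k) = W}"

definition has_gradient :: "((nat \<Rightarrow> real) \<Rightarrow> real) \<Rightarrow> (nat \<Rightarrow> real) \<Rightarrow> nat \<Rightarrow> (nat \<Rightarrow> real) \<Rightarrow> bool" where
  "has_gradient f g m w \<longleftrightarrow>
     (\<forall>k\<in>{1..m}. ((\<lambda>t. f (w(k := t))) has_real_derivative g k) (at (w k)))"

end

theory Submission
  imports Defs
begin

lemma exp_q_bound:
  fixes a q :: real assumes "a \<ge> 0" "q \<ge> 1"
  shows "1 + q * (exp a - 1) \<le> exp (q * a)"
proof -
  let ?f = "\<lambda>x. exp (q * x) - 1 - q * (exp x - 1)"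
  have "?f 0 \<le> ?f a"
  proof (rule DERIV_nonneg_imp_nondecreasing[OF assms(1)])
    fix x :: real assume x: "0 \<le> x" "x \<le> a"
    have "DERIV ?f x :> exp (q * x) * q - q * exp x"
      by (auto intro!: derivative_eq_intros)
    moreover have "exp x \<le> exp (q * x)" using x assms
      by (simp add: mult_le_cancel_right1)
    hence "q * exp x \<le> q * exp (q * x)" using assms by simp
    ultimately show "\<exists>y. DERIV ?f x :> y \<and> y \<ge> 0" by (intro exI[of _ "exp (q * x) * q - q * exp x"]) (auto simp: mult.commute)
  qed
  thus ?thesis by simp
qed

lemma factor_bound:
  fixes a b p :: real assumes "0 \<le> p" "p < 1" "\<bar>a\<bar> \<le> b"
  shows "\<bar>(exp a - p) / (1 - p)\<bar> \<le> exp (b / (1 - p))"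
proof -
  define q where "q = 1 / (1 - p)"
  have q1: "q \<ge> 1" using assms by (simp add: q_def field_simps)
  have eq: "(exp a - p) / (1 - p) = 1 + q * (exp a - 1)" using assms by (simp add: q_def field_simps)
  have bq: "b / (1 - p) = q * b" by (simp add: q_def)
  have b0: "b \<ge> 0" using assms by linarith
  show ?thesis
  proof (cases "a \<ge> 0")
    case True
    have "1 + q * (exp a - 1) \<le> exp (q * a)" using exp_q_bound[OF True q1] .
    also have "\<dots> \<le> exp (q * b)" using assms q1 True by (intro exp_mono mult_left_mono) auto
    finally have u: "1 + q * (exp a - 1) \<le> exp (q*b)" .
    have "exp a \<ge> 1" using True by simp
    hence "1 + q * (exp a - 1) \<ge> 0" using q1 by simp
    thus ?thesis using u eq bq by simp
  next
    case False
    have e1: "exp a \<le> 1" using False by simp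
    have "1 + a \<le> exp a" by (rule exp_ge_add_one_self)
    hence "exp a - 1 \<ge> - b" using assms by linarith
    hence "q * (exp a - 1) \<ge> q * (-b)" using q1 by (intro mult_left_mono) auto
    hence l: "1 + q * (exp a - 1) \<ge> 1 - q * b" by simp
    have "1 + q*b \<le> exp (q*b)" by (rule exp_ge_add_one_self)
    moreover have "1 + q * (exp a - 1) \<le> 1" using e1 q1 by (simp add: mult_nonneg_nonpos)
    moreover have "q*b \<ge> 0" using q1 b0 by simp
    ultimately show ?thesis using l unfolding eq bq abs_le_iff by linarith
  qed
qed

lemma single_bound:
  fixes v x y pp M :: real
  assumes "\<bar>x\<bar> \<le> 1" "\<bar>y\<bar> \<le> 1" "0 \<le> pp" "pp \<le> M" "M < 1"
  shows "\<bar>exp (- v * x) * y / (1 - pp)\<bar> \<le> (1/(1-M)) * exp ((1/(1-M)) * \<bar>v\<bar>)"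
proof -
  have r1: "1/(1-M) \<ge> 1" using assms by (simp add: field_simps)
  have "\<bar>- v * x\<bar> \<le> \<bar>v\<bar>" using assms by (simp add: abs_mult mult_left_le)
  also have "\<bar>v\<bar> \<le> (1/(1-M)) * \<bar>v\<bar>" using assms by (simp add: le_divide_eq mult_left_le)
  finally have e: "exp (- v * x) \<le> exp ((1/(1-M)) * \<bar>v\<bar>)" by simp
  have d: "1/(1-pp) \<le> 1/(1-M)" using assms by (intro divide_left_mono) auto
  have "\<bar>exp (- v * x) * y / (1 - pp)\<bar> = exp (- v * x) * \<bar>y\<bar> * (1/(1-pp))"
    using assms by (simp add: abs_mult)
  also have "\<dots> \<le> exp ((1/(1-M)) * \<bar>v\<bar>) * 1 * (1/(1-M))"
    using assms e d by (intro mult_mono) auto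
  finally show ?thesis by simp
qed

lemma prod_bound:
  fixes J :: "nat set" and v p :: "nat \<Rightarrow> real" and xn M :: real and X :: "nat \<Rightarrow> real"
  assumes "finite J" "\<forall>j\<in>J. 0 \<le> p j \<and> p j \<le> M \<and> \<bar>X j\<bar> \<le> 1" "M < 1" "\<bar>xn\<bar> \<le> 1"
  shows "\<bar>\<Prod>j\<in>J. (exp (- v j * xn * X j) - p j) / (1 - p j)\<bar> \<le> exp ((1/(1-M)) * (\<Sum>j\<in>J. \<bar>v j\<bar>))"
proof -
  have "\<bar>\<Prod>j\<in>J. (exp (- v j * xn * X j) - p j) / (1 - p j)\<bar>
      = (\<Prod>j\<in>J. \<bar>(exp (- v j * xn * X j) - p j) / (1 - p j)\<bar>)" by (rule abs_prod)
  also have "\<dots> \<le> (\<Prod>j\<in>J. exp ((1/(1-M)) * \<bar>v j\<bar>))"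
  proof (rule prod_mono)
    fix j assume j: "j \<in> J"
    have pj: "0 \<le> p j" "p j \<le> M" "\<bar>X j\<bar> \<le> 1" using assms j by auto
    have "\<bar>- v j * xn * X j\<bar> \<le> \<bar>v j\<bar>"
    proof -
      have "\<bar>xn * X j\<bar> \<le> 1" using pj assms by (simp add: abs_mult mult_le_one)
      hence "\<bar>v j\<bar> * \<bar>xn * X j\<bar> \<le> \<bar>v j\<bar>" by (simp add: mult_left_le)
      thus ?thesis by (simp add: abs_mult mult.assoc)
    qed
    hence "\<bar>(exp (- v j * xn * X j) - p j) / (1 - p j)\<bar> \<le> exp (\<bar>v j\<bar> / (1 - p j))"
      using pj assms by (intro factor_bound) auto
    also have "\<dots> \<le> exp ((1/(1-M)) * \<bar>v j\<bar>)"
    proof -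
      have "\<bar>v j\<bar> / (1 - p j) \<le> \<bar>v j\<bar> / (1 - M)"
        using pj assms by (intro divide_left_mono) auto
      thus ?thesis by simp
    qed
    finally show "0 \<le> \<bar>(exp (- v j * xn * X j) - p j) / (1 - p j)\<bar> \<and>
      \<bar>(exp (- v j * xn * X j) - p j) / (1 - p j)\<bar> \<le> exp ((1/(1-M)) * \<bar>v j\<bar>)" by simp
  qed
  also have "\<dots> = exp ((1/(1-M)) * (\<Sum>j\<in>J. \<bar>v j\<bar>))"
    using assms by (simp add: exp_sum sum_distrib_left)
  finally show ?thesis .
qed

lemma g_bound:
  fixes n i :: nat and p w X :: "nat \<Rightarrow> real" and M :: real
  assumes n2: "n \<ge> 2" and pp: "\<forall>j\<in>{1..n}. 0 \<le> p j \<and> p j \<le> M" and M1: "M < 1"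
    and Xb: "\<forall>j\<in>{1..n}. \<bar>X j\<bar> \<le> 1" and i: "i \<in> {1..n}"
  shows "\<bar>g_under n p w X i\<bar> \<le> (1/(1-M))^2 * exp ((1/(1-M)) * (\<Sum>j\<in>{1..n}. \<bar>vv n w j\<bar>))"
proof -
  define r where "r = 1/(1-M)"
  have M0: "M \<ge> 0" using pp n2 by force
  have r1: "r \<ge> 1" using M0 M1 by (simp add: r_def field_simps)
  have Xn: "\<bar>X n\<bar> \<le> 1" using Xb n2 by auto
  have pn: "0 \<le> p n" "p n \<le> M" using pp n2 by auto
  have Fn: "\<bar>exp (- vv n w n * X n) * X n / (1 - p n)\<bar> \<le> r * exp (r * \<bar>vv n w n\<bar>)"
    unfolding r_def using single_bound[OF Xn Xn pn M1] .
  have sub: "\<forall>j\<in>J. 0 \<le> p j \<and> p j \<le> M \<and> \<bar>X j\<bar> \<le> 1" if "J \<subseteq> {1..n}" for J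
    using that pp Xb by auto
  have P: "\<bar>\<Prod>j\<in>J. (exp (- vv n w j * X n * X j) - p j) / (1 - p j)\<bar> \<le> exp (r * (\<Sum>j\<in>J. \<bar>vv n w j\<bar>))"
    if "J \<subseteq> {1..n-1}" for J
    unfolding r_def
  proof (rule prod_bound)
    have "J \<subseteq> {1..n}" using that by force
    thus "\<forall>j\<in>J. 0 \<le> p j \<and> p j \<le> M \<and> \<bar>X j\<bar> \<le> 1" by (rule sub)
  qed (use that M1 Xn finite_subset[OF that] in auto)
  have nsplit: "(\<Sum>j\<in>{1..n}. \<bar>vv n w j\<bar>) = \<bar>vv n w n\<bar> + (\<Sum>j\<in>{1..n-1}. \<bar>vv n w j\<bar>)"
  proof -
    have "{1..n} = insert n {1..n-1}" using n2 by auto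
    moreover have "n \<notin> {1..n-1}" using n2 by auto
    ultimately show ?thesis by simp
  qed
  have Sge: "(\<Sum>j\<in>{1..n}. \<bar>vv n w j\<bar>) \<ge> 0" by (simp add: sum_nonneg)
  show ?thesis
  proof (cases "i = n")
    case True
    have "\<bar>g_under n p w X i\<bar> = \<bar>exp (- vv n w n * X n) * X n / (1 - p n)\<bar> *
        \<bar>\<Prod>j\<in>{1..n-1}. (exp (- vv n w j * X n * X j) - p j) / (1 - p j)\<bar>"
      using True by (simp add: g_under_def abs_mult)
    also have "\<dots> \<le> (r * exp (r * \<bar>vv n w n\<bar>)) * exp (r * (\<Sum>j\<in>{1..n-1}. \<bar>vv n w j\<bar>))"
      using Fn P[of "{1..n-1}"] r1 by (intro mult_mono) auto
    also have "\<dots> = r * exp (r * (\<Sum>j\<in>{1..n}. \<bar>vv n w j\<bar>))"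
      unfolding nsplit by (simp add: distrib_left exp_add)
    also have "\<dots> \<le> r^2 * exp (r * (\<Sum>j\<in>{1..n}. \<bar>vv n w j\<bar>))"
      using r1 by (intro mult_right_mono) (auto simp: power2_eq_square)
    finally show ?thesis by (simp add: r_def)
  next
    case False
    hence iJ: "i \<in> {1..n-1}" using i by auto
    have Xi: "\<bar>X i\<bar> \<le> 1" using Xb i by auto
    have pi: "0 \<le> p i" "p i \<le> M" using pp i by auto
    have Xni: "\<bar>X n * X i\<bar> \<le> 1" using Xn Xi by (simp add: abs_mult mult_le_one)
    have Fi: "\<bar>exp (- vv n w i * X n * X i) * X i / (1 - p i)\<bar> \<le> r * exp (r * \<bar>vv n w i\<bar>)"
      unfolding r_def using single_bound[OF Xni Xi pi M1, of "vv n w i"] by (simp add: mult.assoc)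
    have isplit: "(\<Sum>j\<in>{1..n-1}. \<bar>vv n w j\<bar>) = \<bar>vv n w i\<bar> + (\<Sum>j\<in>{1..n-1}-{i}. \<bar>vv n w j\<bar>)"
      using iJ by (simp add: sum.remove)
    have "\<bar>g_under n p w X i\<bar> = \<bar>exp (- vv n w n * X n) * X n / (1 - p n)\<bar> *
        \<bar>exp (- vv n w i * X n * X i) * X i / (1 - p i)\<bar> *
        \<bar>\<Prod>j\<in>{1..n-1}-{i}. (exp (- vv n w j * X n * X j) - p j) / (1 - p j)\<bar>"
      using False by (simp add: g_under_def abs_mult)
    also have "\<dots> \<le> (r * exp (r * \<bar>vv n w n\<bar>)) * (r * exp (r * \<bar>vv n w i\<bar>)) *
        exp (r * (\<Sum>j\<in>{1..n-1}-{i}. \<bar>vv n w j\<bar>))"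
      using Fn Fi P[of "{1..n-1}-{i}"] r1 by (intro mult_mono) auto
    also have "\<dots> = r^2 * exp (r * (\<Sum>j\<in>{1..n}. \<bar>vv n w j\<bar>))"
      unfolding nsplit isplit by (simp add: distrib_left exp_add power2_eq_square)
    finally show ?thesis by (simp add: r_def)
  qed
qed


lemma G_under_eq:
  "G_under n p w X k = (if k \<in> {1..n} then g_under n p w X k
      else if k \<in> {n+1..2*n} then - g_under n p w X (k - n) else 0)"
proof -
  have a: "(\<Sum>i\<in>{1..n}. g_under n p w X i * (if k = i then 1 else 0)) =
      (if k \<in> {1..n} then g_under n p w X k else 0)"
    by (simp add: if_distrib cong: if_cong)
  have b: "(\<Sum>i\<in>{1..n}. g_under n p w X i * (if k = n + i then 1 else 0)) =
      (if k \<in> {n+1..2*n} then g_under n p w X (k - n) else 0)"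
  proof -
    have "(\<Sum>i\<in>{1..n}. g_under n p w X i * (if k = n + i then 1 else 0)) =
        (\<Sum>i\<in>{1..n}. if i = k - n \<and> n < k then g_under n p w X i else 0)"
      by (rule sum.cong) auto
    also have "\<dots> = (if k \<in> {n+1..2*n} then g_under n p w X (k - n) else 0)"
      by (cases "n < k") (auto simp: sum.delta')
    finally show ?thesis .
  qed
  have "G_under n p w X k = (\<Sum>i\<in>{1..n}. g_under n p w X i * (if k = i then 1 else 0)) -
      (\<Sum>i\<in>{1..n}. g_under n p w X i * (if k = n + i then 1 else 0))"
    unfolding G_under_def by (simp add: right_diff_distrib sum_subtractf)
  also have "\<dots> = (if k \<in> {1..n} then g_under n p w X k
      else if k \<in> {n+1..2*n} then - g_under n p w X (k - n) else 0)"
    unfolding a b by auto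
  finally show ?thesis .
qed

lemma vsum_bound:
  assumes "w \<in> simplex lam (2 * n + 1)"
  shows "(\<Sum>j\<in>{1..n}. \<bar>vv n w j\<bar>) \<le> lam"
proof -
  have nn: "\<forall>k\<in>{1..2*n+1}. w k \<ge> 0" and s: "(\<Sum>k\<in>{1..2*n+1}. w k) = lam"
    using assms by (auto simp: simplex_def)
  have "(\<Sum>j\<in>{1..n}. \<bar>vv n w j\<bar>) \<le> (\<Sum>j\<in>{1..n}. w j + w (j + n))"
  proof (rule sum_mono)
    fix j assume "j \<in> {1..n}"
    hence "w j \<ge> 0" "w (j+n) \<ge> 0" using nn by auto
    thus "\<bar>vv n w j\<bar> \<le> w j + w (j + n)" by (simp add: vv_def add.commute)
  qed
  also have "\<dots> = (\<Sum>j\<in>{1..n}. w j) + (\<Sum>j\<in>{1+n..n+n}. w j)"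
    using sum.shift_bounds_cl_nat_ivl[of w 1 n n] by (simp add: sum.distrib)
  also have "\<dots> = (\<Sum>j\<in>{1..n+n}. w j)"
    by (subst sum.ub_add_nat) auto
  also have "\<dots> \<le> (\<Sum>j\<in>{1..2*n+1}. w j)"
    using nn by (intro sum_mono2) auto
  finally show ?thesis using s by simp
qed

lemma part2:
  fixes n :: nat and p :: "nat \<Rightarrow> real" and lam :: real
  assumes n2: "n \<ge> 2" and pp: "\<forall>i\<in>{1..n}. 0 \<le> p i \<and> p i < 1"
    and X: "X \<in> obs_set n" and w: "w \<in> simplex lam (2 * n + 1)"
  shows "linf_norm (2 * n + 1) (G_under n p w X)
              \<le> 1 / (1 - Max (p ` {1..n}))^2 * exp (lam / (1 - Max (p ` {1..n})))"
proof -
  define M where "M = Max (p ` {1..n})"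
  have ne: "p ` {1..n} \<noteq> {}" using n2 by auto
  have M1: "M < 1" unfolding M_def using pp ne by (subst Max_less_iff) auto
  have pM: "\<forall>j\<in>{1..n}. 0 \<le> p j \<and> p j \<le> M" unfolding M_def using pp by auto
  have Xb: "\<forall>j\<in>{1..n}. \<bar>X j\<bar> \<le> 1" using X by (auto simp: obs_set_def PiE_def Pi_def)
  define B where "B = (1/(1-M))^2 * exp ((1/(1-M)) * (\<Sum>j\<in>{1..n}. \<bar>vv n w j\<bar>))"
  have gb: "\<bar>g_under n p w X i\<bar> \<le> B" if "i \<in> {1..n}" for i
    unfolding B_def by (rule g_bound[OF n2 pM M1 Xb that])
  have B0: "B \<ge> 0" unfolding B_def by simp
  have "B \<le> (1/(1-M))^2 * exp ((1/(1-M)) * lam)"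
    unfolding B_def using vsum_bound[OF w] M1
    by (intro mult_left_mono) (auto intro!: divide_right_mono)
  also have "\<dots> = 1 / (1 - M)^2 * exp (lam / (1 - M))" by (simp add: power_one_over)
  finally have Bb: "B \<le> 1 / (1 - M)^2 * exp (lam / (1 - M))" .
  have "linf_norm (2 * n + 1) (G_under n p w X) \<le> B"
    unfolding linf_norm_def
  proof (subst Max_le_iff, simp, force, safe)
    fix k assume k: "k \<in> {1..2*n+1}"
    show "\<bar>G_under n p w X k\<bar> \<le> B"
    proof (cases "k \<in> {1..n}")
      case True thus ?thesis using gb by (simp add: G_under_eq)
    next
      case F: False
      show ?thesis
      proof (cases "k \<in> {n+1..2*n}")
        case True
        hence "k - n \<in> {1..n}" by auto
        thus ?thesis using gb F True by (simp add: G_under_eq)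
      next
        case False
        have "G_under n p w X k = 0" using F False by (subst G_under_eq) (simp only: if_False)
        thus ?thesis using B0 by simp
      qed
    qed
  qed
  thus ?thesis using Bb by (simp add: M_def)
qed

lemma g_expect:
  fixes n i :: nat and p w z :: "nat \<Rightarrow> real"
  assumes n2: "n \<ge> 2" and pp: "\<forall>i\<in>{1..n}. 0 \<le> p i \<and> p i < 1" and z: "z \<in> spins n"
    and i: "i \<in> {1..n}"
  shows "(\<Sum>c\<in>masks n. (\<Prod>j\<in>{1..n}. if c j = 1 then 1 - p j else p j) *
            g_under n p w (\<lambda>j. if j \<in> {1..n} then c j * z j else 0) i)
     = -(z n * (if i = n then 1 else z i)) *
        exp (- (\<Sum>j\<in>{1..n-1}. vv n w j * z n * z j) - vv n w n * z n)"
proof -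
  define K where "K = -(exp (- vv n w n * z n) * z n / (1 - p n))"
  define psi where "psi j c = (if j = i then exp (- vv n w j * z n * (c * z j)) * (c * z j) / (1 - p j)
      else (exp (- vv n w j * z n * (c * z j)) - p j) / (1 - p j))" for j c
  define q where "q j c = (if c = 1 then 1 - p j else p j)" for j and c :: real
  define chi where "chi j c = q j c * (if j = n then c * K else psi j c)" for j c
  define J where "J = {1..n-1}"
  have finJ: "finite J" by (simp add: J_def)
  have nJ: "n \<notin> J" and Jn: "{1..n} = insert n J" using n2 by (auto simp: J_def)
  have A: "(\<Prod>j\<in>{1..n}. if c j = 1 then 1 - p j else p j) *
            g_under n p w (\<lambda>j. if j \<in> {1..n} then c j * z j else 0) i = (\<Prod>j\<in>{1..n}. chi j (c j))"
    if c: "c \<in> masks n" for c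
  proof -
    have cn: "c n = 0 \<or> c n = 1" using c n2 by (auto simp: masks_def PiE_def Pi_def)
    have sp: "(\<Prod>j\<in>{1..n}. chi j (c j)) = (\<Prod>j\<in>{1..n}. q j (c j)) *
        (c n * K * (\<Prod>j\<in>J. psi j (c j)))"
    proof -
      have "(\<Prod>j\<in>{1..n}. chi j (c j)) = (\<Prod>j\<in>{1..n}. q j (c j)) *
          (\<Prod>j\<in>{1..n}. if j = n then c j * K else psi j (c j))"
        unfolding chi_def by (simp add: prod.distrib)
      also have "(\<Prod>j\<in>{1..n}. if j = n then c j * K else psi j (c j)) = c n * K * (\<Prod>j\<in>J. psi j (c j))"
      proof -
        have "(\<Prod>j\<in>J. if j = n then c j * K else psi j (c j)) = (\<Prod>j\<in>J. psi j (c j))"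
          by (rule prod.cong) (use nJ in auto)
        thus ?thesis unfolding Jn using finJ nJ by (simp add: prod.insert)
      qed
      finally show ?thesis .
    qed
    have g: "g_under n p w (\<lambda>j. if j \<in> {1..n} then c j * z j else 0) i = c n * K * (\<Prod>j\<in>J. psi j (c j))"
    proof (cases "c n = 0")
      case True thus ?thesis using n2 by (simp add: g_under_def)
    next
      case False
      hence c1: "c n = 1" using cn by simp
      show ?thesis
      proof (cases "i = n")
        case True
        have "(\<Prod>j\<in>{1..n-1}. (exp (- vv n w j * (if n \<in> {1..n} then c n * z n else 0) *
                   (if j \<in> {1..n} then c j * z j else 0)) - p j) / (1 - p j)) = (\<Prod>j\<in>J. psi j (c j))"
          unfolding J_def psi_def using True c1 n2 by (intro prod.cong) auto
        thus ?thesis using True c1 n2 by (simp add: g_under_def K_def)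
      next
        case False
        have iJ: "i \<in> J" using i False by (auto simp: J_def)
        have "(\<Prod>j\<in>J. psi j (c j)) = psi i (c i) * (\<Prod>j\<in>J - {i}. psi j (c j))"
          using iJ finJ by (simp add: prod.remove)
        moreover have "(\<Prod>j\<in>{1..n-1} - {i}. (exp (- vv n w j * (if n \<in> {1..n} then c n * z n else 0) *
                   (if j \<in> {1..n} then c j * z j else 0)) - p j) / (1 - p j)) = (\<Prod>j\<in>J - {i}. psi j (c j))"
          unfolding J_def psi_def using c1 n2 by (intro prod.cong) auto
        moreover have "i \<in> {1..n}" "n \<in> {1..n}" using i n2 by auto
        ultimately show ?thesis using False c1 n2
          by (simp add: g_under_def K_def psi_def)
      qed
    qed
    show ?thesis unfolding sp g q_def by simp
  qed
  have pj: "1 - p j \<noteq> 0" if "j \<in> {1..n}" for j using pp that by (metis less_irrefl right_minus_eq)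
  have B: "(\<Sum>c\<in>{0,1}. chi j c) = (if j = n then -(exp (- vv n w n * z n) * z n)
      else if j = i then exp (- vv n w j * z n * z j) * z j else exp (- vv n w j * z n * z j))"
    if j: "j \<in> {1..n}" for j
    using pj[OF j] by (cases "j = n"; cases "j = i") (simp_all add: chi_def q_def K_def psi_def)
  have "(\<Sum>c\<in>masks n. (\<Prod>j\<in>{1..n}. if c j = 1 then 1 - p j else p j) *
            g_under n p w (\<lambda>j. if j \<in> {1..n} then c j * z j else 0) i)
      = (\<Sum>c\<in>masks n. \<Prod>j\<in>{1..n}. chi j (c j))"
    using A by (rule sum.cong[OF refl])
  also have "\<dots> = (\<Prod>j\<in>{1..n}. \<Sum>c\<in>{0,1}. chi j c)"
    unfolding masks_def by (rule prod_sum_PiE[symmetric]) auto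
  also have "\<dots> = (\<Prod>j\<in>{1..n}. if j = n then -(exp (- vv n w n * z n) * z n)
      else if j = i then exp (- vv n w j * z n * z j) * z j else exp (- vv n w j * z n * z j))"
    using B by (rule prod.cong[OF refl])
  also have "\<dots> = -(exp (- vv n w n * z n) * z n) *
      (\<Prod>j\<in>J. exp (- vv n w j * z n * z j) * (if j = i then z j else 1))"
  proof -
    have "(\<Prod>j\<in>J. if j = n then -(exp (- vv n w n * z n) * z n)
      else if j = i then exp (- vv n w j * z n * z j) * z j else exp (- vv n w j * z n * z j))
       = (\<Prod>j\<in>J. exp (- vv n w j * z n * z j) * (if j = i then z j else 1))"
      by (rule prod.cong) (use nJ in auto)
    thus ?thesis unfolding Jn using finJ nJ by (simp add: prod.insert)
  qed
  also have "\<dots> = -(exp (- vv n w n * z n) * z n) *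
      ((\<Prod>j\<in>J. exp (- vv n w j * z n * z j)) * (if i \<in> J then z i else 1))"
    using finJ by (simp add: prod.distrib prod.delta)
  also have "\<dots> = -(z n * (if i = n then 1 else z i)) *
        exp (- (\<Sum>j\<in>{1..n-1}. vv n w j * z n * z j) - vv n w n * z n)"
  proof -
    have e: "exp (- (\<Sum>j\<in>{1..n-1}. vv n w j * z n * z j) - vv n w n * z n)
        = exp (- vv n w n * z n) * (\<Prod>j\<in>J. exp (- vv n w j * z n * z j))"
    proof -
      have "- (\<Sum>j\<in>{1..n-1}. vv n w j * z n * z j) - vv n w n * z n
          = - vv n w n * z n + (\<Sum>j\<in>J. - vv n w j * z n * z j)"
        unfolding J_def by (simp add: sum_negf)
      thus ?thesis using finJ by (simp only: exp_add exp_sum)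
    qed
    have "(i \<in> J) = (i \<noteq> n)" using i by (auto simp: J_def)
    thus ?thesis unfolding e by simp
  qed
  finally show ?thesis .
qed

definition dd :: "nat \<Rightarrow> nat \<Rightarrow> nat \<Rightarrow> real" where
  "dd n k j = (if j = k then 1 else 0) - (if n + j = k then 1 else 0)"

lemma dsum:
  "(\<Sum>j\<in>{1..n-1}. dd n k j * z n * z j) =
     (if k \<in> {1..n-1} then z n * z k else 0) - (if n < k \<and> k - n \<in> {1..n-1} then z n * z (k - n) else 0)"
proof -
  have "(\<Sum>j\<in>{1..n-1}. dd n k j * z n * z j) =
      (\<Sum>j\<in>{1..n-1}. if j = k then z n * z k else 0) - (\<Sum>j\<in>{1..n-1}. if j = k - n \<and> n < k then z n * z (k - n) else 0)"
    unfolding sum_subtractf[symmetric] by (rule sum.cong) (auto simp: dd_def)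
  also have "\<dots> = (if k \<in> {1..n-1} then z n * z k else 0) - (if n < k \<and> k - n \<in> {1..n-1} then z n * z (k - n) else 0)"
    by (cases "n < k") (simp_all add: sum.delta')
  finally show ?thesis .
qed

lemma alpha_eq:
  assumes n2: "n \<ge> 2"
  shows "-(\<Sum>j\<in>{1..n-1}. dd n k j * z n * z j) - dd n k n * z n =
    (if k \<in> {1..n} then -(z n * (if k = n then 1 else z k))
     else if k \<in> {n+1..2*n} then z n * (if k - n = n then 1 else z (k - n)) else 0)"
  unfolding dsum using n2 by (auto simp: dd_def)

lemma vv_upd: "vv n (w(k := t)) j = vv n w j + (t - w k) * dd n k j"
  by (auto simp: vv_def dd_def)

lemma E_upd:
  "exp (- (\<Sum>j\<in>{1..n-1}. vv n (w(k := t)) j * z n * z j) - vv n (w(k := t)) n * z n)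
   = exp ((- (\<Sum>j\<in>{1..n-1}. vv n w j * z n * z j) - vv n w n * z n) +
          (t - w k) * (-(\<Sum>j\<in>{1..n-1}. dd n k j * z n * z j) - dd n k n * z n))"
proof -
  have "(\<Sum>j\<in>{1..n-1}. vv n (w(k := t)) j * z n * z j) =
      (\<Sum>j\<in>{1..n-1}. vv n w j * z n * z j) + (t - w k) * (\<Sum>j\<in>{1..n-1}. dd n k j * z n * z j)"
  proof -
    have "(\<Sum>j\<in>{1..n-1}. vv n (w(k := t)) j * z n * z j) =
      (\<Sum>j\<in>{1..n-1}. vv n w j * z n * z j + (t - w k) * (dd n k j * z n * z j))"
      by (rule sum.cong) (simp_all add: vv_upd algebra_simps)
    thus ?thesis by (simp add: sum.distrib sum_distrib_left)
  qed
  thus ?thesis unfolding vv_upd by (simp add: algebra_simps)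
qed

lemma G_expect:
  fixes n :: nat and p w z :: "nat \<Rightarrow> real"
  assumes n2: "n \<ge> 2" and pp: "\<forall>i\<in>{1..n}. 0 \<le> p i \<and> p i < 1" and z: "z \<in> spins n"
  shows "(\<Sum>c\<in>masks n. (\<Prod>j\<in>{1..n}. if c j = 1 then 1 - p j else p j) *
            G_under n p w (\<lambda>j. if j \<in> {1..n} then c j * z j else 0) k)
     = exp (- (\<Sum>j\<in>{1..n-1}. vv n w j * z n * z j) - vv n w n * z n) *
        (-(\<Sum>j\<in>{1..n-1}. dd n k j * z n * z j) - dd n k n * z n)"
proof -
  note ge = g_expect[OF n2 pp z]
  show ?thesis
  proof (cases "k \<in> {1..n}")
    case True
    have "G_under n p w X k = g_under n p w X k" for X using True by (simp add: G_under_eq)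
    thus ?thesis unfolding alpha_eq[OF n2] using True ge[OF True, of w] by simp
  next
    case F: False
    show ?thesis
    proof (cases "k \<in> {n+1..2*n}")
      case True
      hence kn: "k - n \<in> {1..n}" by auto
      have "G_under n p w X k = - g_under n p w X (k - n)" for X using F True by (simp add: G_under_eq)
      thus ?thesis unfolding alpha_eq[OF n2] using F True ge[OF kn, of w]
        by (simp add: sum_negf)
    next
      case False
      have "G_under n p w X k = 0" for X using F False by (subst G_under_eq) (simp only: F False if_False)
      thus ?thesis unfolding alpha_eq[OF n2] by (simp only: F False if_False) simp
    qed
  qed
qed

lemma part1:
  fixes n :: nat and p :: "nat \<Rightarrow> real"
  assumes n2: "n \<ge> 2" and pp: "\<forall>i\<in>{1..n}. 0 \<le> p i \<and> p i < 1"
  shows "has_gradient (S_tilde n A \<theta>)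
              (\<lambda>k. miss_expect n A \<theta> p (\<lambda>X. G_under n p w X k)) (2 * n + 1) w"
  unfolding has_gradient_def
proof
  fix k assume "k \<in> {1..2*n+1}"
  define Zc where "Zc = (\<Sum>z\<in>spins n. ising_weight n A \<theta> z)"
  define x0 where "x0 z = - (\<Sum>j\<in>{1..n-1}. vv n w j * z n * z j) - vv n w n * z n" for z :: "nat \<Rightarrow> real"
  define al where "al z = -(\<Sum>j\<in>{1..n-1}. dd n k j * z n * z j) - dd n k n * z n" for z :: "nat \<Rightarrow> real"
  have St: "S_tilde n A \<theta> (w(k := t)) = (\<Sum>z\<in>spins n. ising_weight n A \<theta> z * exp (x0 z + (t - w k) * al z)) / Zc" for t
    unfolding S_tilde_def ising_expect_def Zc_def x0_def al_def E_upd ..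
  have fin: "finite (spins n)" unfolding spins_def by (rule finite_PiE) auto
  have ne: "spins n \<noteq> {}" unfolding spins_def by (simp add: PiE_eq_empty_iff)
  have Zc0: "Zc \<noteq> 0"
  proof -
    have "Zc > 0" unfolding Zc_def ising_weight_def using fin ne by (intro sum_pos) auto
    thus ?thesis by simp
  qed
  have key: "(\<Sum>c\<in>masks n. (\<Prod>j\<in>{1..n}. if c j = 1 then 1 - p j else p j) *
            G_under n p w (\<lambda>j. if j \<in> {1..n} then c j * z j else 0) k) = exp (x0 z) * al z"
    if "z \<in> spins n" for z using G_expect[OF n2 pp that] unfolding x0_def al_def .
  have me: "miss_expect n A \<theta> p (\<lambda>X. G_under n p w X k) =
      (\<Sum>z\<in>spins n. ising_weight n A \<theta> z * (exp (x0 z + (w k - w k) * al z) * al z)) / Zc"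
    unfolding miss_expect_def ising_expect_def Zc_def
    by (intro arg_cong2[where f="(/)"] sum.cong refl) (simp only: key, simp)
  show "((\<lambda>t. S_tilde n A \<theta> (w(k := t))) has_real_derivative
          miss_expect n A \<theta> p (\<lambda>X. G_under n p w X k)) (at (w k))"
    unfolding St me using Zc0
    by (auto intro!: derivative_eq_intros sum.cong simp: mult_ac)
qed

theorem mainTheorem10:
  fixes n :: nat and A :: "nat \<Rightarrow> nat \<Rightarrow> real" and \<theta> p :: "nat \<Rightarrow> real" and lam :: real
  assumes "n \<ge> 2"
    and "\<forall>i\<in>{1..n}. \<forall>j\<in>{1..n}. A i j = A j i"
    and "\<forall>i\<in>{1..n}. A i i = 0"
    and "lam > 0"
    and "\<forall>i\<in>{1..n}. 0 \<le> p i \<and> p i < 1"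
  shows "(\<forall>w. has_gradient (S_tilde n A \<theta>)
              (\<lambda>k. miss_expect n A \<theta> p (\<lambda>X. G_under n p w X k)) (2 * n + 1) w)
       \<and> (\<forall>X\<in>obs_set n. \<forall>w\<in>simplex lam (2 * n + 1).
            linf_norm (2 * n + 1) (G_under n p w X)
              \<le> 1 / (1 - Max (p ` {1..n}))^2 * exp (lam / (1 - Max (p ` {1..n}))))"
  using part1[OF assms(1) assms(5)] part2[OF assms(1) assms(5)] by blast

end
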